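(* Let $\mathcal N=(Q,\Sigma,\delta,I,F)$ be an NFA with $L=\mathcal L(\mathcal N)$. The following are equivalent: (a) $\mathsf G^r(\mathcal N)$ is the minimal DFA for $L$; (b) $\sim^r_{\mathcal N}=\sim^r_L$; (c) for all $u,v\in\Sigma^*$, $W^{\mathcal N}_{\mathrm{post}^{\mathcal N}_u(I),F}=W^{\mathcal N}_{\mathrm{post}^{\mathcal N}_v(I),F}\iff\mathrm{post}^{\mathcal N}_u(I)=\mathrm{post}^{\mathcal N}_v(I)$; (d) for all $q\in Q$, $P_{\sim^r_L}(W^{\mathcal N}_{I,q})=W^{\mathcal N}_{I,q}$; (e) $\mathcal N^R$ is atomic.
   Context: NFA $\mathcal N=(Q,\Sigma,\delta,I,F)$ with $\delta:Q\times\Sigma\to\wp(Q)$ extended to words by $\hat\delta$; $W^{\mathcal N}_{S,T}=\{w\mid\exists q\in S,q'\in T:q'\in\hat\delta(q,w)\}$ (singletons without braces); $\mathrm{post}^{\mathcal N}_w(S)=\{q\mid w\in W^{\mathcal N}_{S,q}\}$; $\mathcal L(\mathcal N)=W^{\mathcal N}_{I,F}$. Reverse $\mathcal N^R=(Q,\Sigma,\delta_r,F,I)$ with $q\in\delta_r(q',a)$ iff $q'\in\delta(q,a)$. $u\sim^r_L v\iff u^{-1}L=v^{-1}L$ with $u^{-1}L=\{x\mid ux\in L\}$; $u\sim^r_{\mathcal N}v\iff\mathrm{post}^{\mathcal N}_u(I)=\mathrm{post}^{\mathcal N}_v(I)$. For an equivalence $\sim$, $P_\sim(S)=\bigcup_{u\in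 S}\{v\mid u\sim v\}$. $\mathsf G^r(\mathcal N)$ is the DFA with states the classes of $\sim^r_{\mathcal N}$, initial state the class of $\varepsilon$, final states the classes of words of $L$, transition from the class of $u$ on $a$ to the class of $ua$ (isomorphic to the reachable subset construction $\mathcal N^D$). For a regular language $K$ with distinct left quotients $K_0,\dots,K_{n-1}$, an atom of $K$ is a nonempty intersection $\widetilde K_0\cap\dots\cap\widetilde K_{n-1}$ with $\widetilde K_i\in\{K_i,K_i^c\}$; an NFA is atomic if the right language $W_{q,F}$ of each of its states is a union of atoms of its language. The minimal DFA is the unique (up to isomorphism) complete DFA with fewest states for $L$. *)

theory Defs
  imports Main
begin

record ('q, 'a) nfa =
  states :: "'q set"
  alpha  :: "'a set"
  trans  :: "'q \<Rightarrow> 'a \<Rightarrow> 'q set"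
  init   :: "'q set"
  fin    :: "'q set"

definition wf_nfa :: "('q, 'a) nfa \<Rightarrow> bool" where
  "wf_nfa N \<longleftrightarrow> finite (states N) \<and> finite (alpha N) \<and>
     init N \<subseteq> states N \<and> fin N \<subseteq> states N \<and>
     (\<forall>q\<in>states N. \<forall>a\<in>alpha N. trans N q a \<subseteq> states N)"

fun delta_hat :: "('q, 'a) nfa \<Rightarrow> 'q \<Rightarrow> 'a list \<Rightarrow> 'q set" where
  "delta_hat N q [] = {q}"
| "delta_hat N q (a # w) = (\<Union>p\<in>trans N q a. delta_hat N p w)"

definition W :: "('q, 'a) nfa \<Rightarrow> 'q set \<Rightarrow> 'q set \<Rightarrow> 'a list set" where
  "W N S T = {w \<in> lists (alpha N). \<exists>q\<in>S. \<exists>q'\<in>T. q' \<in> delta_hat N q w}"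

definition post :: "('q, 'a) nfa \<Rightarrow> 'a list \<Rightarrow> 'q set \<Rightarrow> 'q set" where
  "post N w S = {q. w \<in> W N S {q}}"

definition nlang :: "('q, 'a) nfa \<Rightarrow> 'a list set" where
  "nlang N = W N (init N) (fin N)"

definition reverse_nfa :: "('q, 'a) nfa \<Rightarrow> ('q, 'a) nfa" where
  "reverse_nfa N = \<lparr> states = states N, alpha = alpha N,
      trans = (\<lambda>q' a. {q \<in> states N. q' \<in> trans N q a}),
      init = fin N, fin = init N \<rparr>"

definition left_quot :: "'a list \<Rightarrow> 'a list set \<Rightarrow> 'a list set" where
  "left_quot u L = {x. u @ x \<in> L}"

definition right_eq_lang :: "'a set \<Rightarrow> 'a list set \<Rightarrow> ('a list \<times> 'a list) set" where
  "right_eq_lang \<Sigma> L = {(u, v). u \<in> lists \<Sigma> \<and> v \<in> lists \<Sigma> \<and> left_quot u L = left_quot v L}"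

definition right_eq_nfa :: "('q, 'a) nfa \<Rightarrow> ('a list \<times> 'a list) set" where
  "right_eq_nfa N = {(u, v). u \<in> lists (alpha N) \<and> v \<in> lists (alpha N) \<and>
                          post N u (init N) = post N v (init N)}"

definition P_cl :: "('b \<times> 'b) set \<Rightarrow> 'b set \<Rightarrow> 'b set" where
  "P_cl R S = (\<Union>u\<in>S. {v. (u, v) \<in> R})"

record ('s, 'a) dfa =
  dstates :: "'s set"
  dinit   :: "'s"
  dtrans  :: "'s \<Rightarrow> 'a \<Rightarrow> 's"
  dfin    :: "'s set"

definition complete_dfa :: "'a set \<Rightarrow> ('s, 'a) dfa \<Rightarrow> bool" where
  "complete_dfa \<Sigma> D \<longleftrightarrow> finite (dstates D) \<and> dinit D \<in> dstates D \<and>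
     dfin D \<subseteq> dstates D \<and> (\<forall>s\<in>dstates D. \<forall>a\<in>\<Sigma>. dtrans D s a \<in> dstates D)"

definition dlang :: "'a set \<Rightarrow> ('s, 'a) dfa \<Rightarrow> 'a list set" where
  "dlang \<Sigma> D = {w \<in> lists \<Sigma>. foldl (dtrans D) (dinit D) w \<in> dfin D}"

text \<open>Competitors are taken with states in \<open>nat\<close>, which is no restriction since every
  (finite) DFA can be relabelled into \<open>nat\<close>.\<close>
definition is_minimal_dfa :: "'a set \<Rightarrow> 'a list set \<Rightarrow> ('s, 'a) dfa \<Rightarrow> bool" where
  "is_minimal_dfa \<Sigma> L D \<longleftrightarrow> complete_dfa \<Sigma> D \<and> dlang \<Sigma> D = L \<and>
     (\<forall>D' :: (nat, 'a) dfa. complete_dfa \<Sigma> D' \<and> dlang \<Sigma> D' = L \<longrightarrow>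
        card (dstates D) \<le> card (dstates D'))"

definition Gr :: "('q, 'a) nfa \<Rightarrow> ('a list set, 'a) dfa" where
  "Gr N = (let R = right_eq_nfa N; cls = (\<lambda>u. R `` {u}) in
     \<lparr> dstates = lists (alpha N) // R,
       dinit = cls [],
       dtrans = (\<lambda>C a. cls ((SOME u. u \<in> C) @ [a])),
       dfin = cls ` nlang N \<rparr>)"

definition quotients :: "'a set \<Rightarrow> 'a list set \<Rightarrow> 'a list set set" where
  "quotients \<Sigma> K = {left_quot u K | u. u \<in> lists \<Sigma>}"

definition atoms :: "'a set \<Rightarrow> 'a list set \<Rightarrow> 'a list set set" where
  "atoms \<Sigma> K = {A. A \<noteq> {} \<and> (\<exists>X \<subseteq> quotients \<Sigma> K.
      A = lists \<Sigma> \<inter> \<Inter> X \<inter> (\<Inter>Y\<in>quotients \<Sigma> K - X. lists \<Sigma> - Y))}"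

definition atomic :: "('q, 'a) nfa \<Rightarrow> bool" where
  "atomic M \<longleftrightarrow> (\<forall>q\<in>states M. \<exists>S \<subseteq> atoms (alpha M) (nlang M).
      W M {q} (fin M) = \<Union> S)"

end

theory Submission
  imports Defs
begin


lemma delta_hat_append: "delta_hat N q (u @ v) = (\<Union>p\<in>delta_hat N q u. delta_hat N p v)"
  by (induction u arbitrary: q) auto

lemma delta_hat_states:
  "wf_nfa N \<Longrightarrow> q \<in> states N \<Longrightarrow> w \<in> lists (alpha N) \<Longrightarrow> delta_hat N q w \<subseteq> states N"
  by (induction w arbitrary: q) (fastforce simp: wf_nfa_def)+

lemma mem_post: "q \<in> post N u S \<longleftrightarrow> u \<in> lists (alpha N) \<and> (\<exists>p\<in>S. q \<in> delta_hat N p u)"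
  by (auto simp: post_def W_def)

lemma post_sub: "wf_nfa N \<Longrightarrow> post N u (init N) \<subseteq> states N"
proof
  fix q assume "wf_nfa N" "q \<in> post N u (init N)"
  then obtain p where "u \<in> lists (alpha N)" "p \<in> init N" "q \<in> delta_hat N p u" by (auto simp: mem_post)
  with \<open>wf_nfa N\<close> delta_hat_states[of N p u] show "q \<in> states N" by (auto simp: wf_nfa_def)
qed

lemma W_post: "u \<in> lists (alpha N) \<Longrightarrow> W N (post N u (init N)) (fin N) = left_quot u (nlang N)"
  by (auto simp: W_def left_quot_def nlang_def delta_hat_append) (force simp: mem_post)+

lemma post_append: "u \<in> lists (alpha N) \<Longrightarrow> post N (u @ v) S = post N v (post N u S)"
  by (auto simp: mem_post delta_hat_append) (force simp: mem_post)+

lemma lang_post: "u \<in> lists (alpha N) \<Longrightarrow> u \<in> nlang N \<longleftrightarrow> post N u (init N) \<inter> fin N \<noteq> {}"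
  by (auto simp: nlang_def W_def) (force simp: mem_post)+

lemma nlang_lists: "nlang N \<subseteq> lists (alpha N)"
  by (auto simp: nlang_def W_def)

lemma equiv_R: "equiv (lists (alpha N)) (right_eq_nfa N)"
  unfolding equiv_def by (auto intro!: refl_onI symI transI simp: right_eq_nfa_def)

lemma equiv_NL: "equiv (lists S) (right_eq_lang S L)"
  unfolding equiv_def by (auto intro!: refl_onI symI transI simp: right_eq_lang_def)

lemma R_sub_NL: "right_eq_nfa N \<subseteq> right_eq_lang (alpha N) (nlang N)"
proof
  fix p assume "p \<in> right_eq_nfa N"
  then obtain u v where "p = (u,v)" "u \<in> lists (alpha N)" "v \<in> lists (alpha N)"
    "post N u (init N) = post N v (init N)" by (auto simp: right_eq_nfa_def)
  then show "p \<in> right_eq_lang (alpha N) (nlang N)"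
    using W_post[of u N] W_post[of v N] by (simp add: right_eq_lang_def)
qed

lemma R_eq_iff: "right_eq_nfa N = right_eq_lang (alpha N) (nlang N) \<longleftrightarrow>
   (\<forall>u\<in>lists (alpha N). \<forall>v\<in>lists (alpha N).
      left_quot u (nlang N) = left_quot v (nlang N) \<longrightarrow> post N u (init N) = post N v (init N))"
proof
  assume H: "right_eq_nfa N = right_eq_lang (alpha N) (nlang N)"
  show "\<forall>u\<in>lists (alpha N). \<forall>v\<in>lists (alpha N).
      left_quot u (nlang N) = left_quot v (nlang N) \<longrightarrow> post N u (init N) = post N v (init N)"
  proof (intro ballI impI)
    fix u v assume "u \<in> lists (alpha N)" "v \<in> lists (alpha N)" "left_quot u (nlang N) = left_quot v (nlang N)"
    hence "(u,v) \<in> right_eq_lang (alpha N) (nlang N)" by (simp add: right_eq_lang_def)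
    hence "(u,v) \<in> right_eq_nfa N" using H by simp
    thus "post N u (init N) = post N v (init N)" by (simp add: right_eq_nfa_def)
  qed
next
  assume H: "\<forall>u\<in>lists (alpha N). \<forall>v\<in>lists (alpha N).
      left_quot u (nlang N) = left_quot v (nlang N) \<longrightarrow> post N u (init N) = post N v (init N)"
  have "right_eq_lang (alpha N) (nlang N) \<subseteq> right_eq_nfa N"
    unfolding right_eq_lang_def right_eq_nfa_def using H by blast
  thus "right_eq_nfa N = right_eq_lang (alpha N) (nlang N)" using R_sub_NL[of N] by blast
qed



definition cdfa :: "'a set \<Rightarrow> ('a list \<times> 'a list) set \<Rightarrow> 'a list set \<Rightarrow> ('a list set, 'a) dfa" where
  "cdfa S E L = \<lparr> dstates = lists S // E, dinit = E``{[]},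
     dtrans = (\<lambda>C a. E``{(SOME u. u \<in> C) @ [a]}), dfin = (\<lambda>u. E``{u}) ` L \<rparr>"

lemma Gr_cdfa: "Gr N = cdfa (alpha N) (right_eq_nfa N) (nlang N)"
  by (simp add: Gr_def cdfa_def Let_def)

lemma cdfa_foldl:
  assumes eq: "equiv (lists S) E"
    and rc: "\<And>u v a. (u,v) \<in> E \<Longrightarrow> a \<in> S \<Longrightarrow> (u@[a], v@[a]) \<in> E"
  shows "w \<in> lists S \<Longrightarrow> foldl (dtrans (cdfa S E L)) (E``{[]}) w = E``{w}"
proof (induction w rule: rev_induct)
  case Nil then show ?case by (simp add: cdfa_def)
next
  case (snoc x w)
  then have w: "w \<in> lists S" and x: "x \<in> S" by auto
  define u where "u = (SOME u. u \<in> E``{w})"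
  have "w \<in> E``{w}" using equiv_class_self[OF eq w] .
  hence "u \<in> E``{w}" unfolding u_def by (rule someI)
  hence "(w,u) \<in> E" by simp
  hence "(w@[x], u@[x]) \<in> E" using rc x by blast
  hence "E``{u@[x]} = E``{w@[x]}" using equiv_class_eq[OF eq] by (metis eq equiv_def symE)
  then show ?case using snoc.IH[OF w] by (simp add: cdfa_def u_def)
qed

lemma cdfa_props:
  assumes eq: "equiv (lists S) E"
    and rc: "\<And>u v a. (u,v) \<in> E \<Longrightarrow> a \<in> S \<Longrightarrow> (u@[a], v@[a]) \<in> E"
    and sat: "\<And>u v. (u,v) \<in> E \<Longrightarrow> u \<in> L \<Longrightarrow> v \<in> L"
    and Ls: "L \<subseteq> lists S"
    and fin: "finite (lists S // E)"
  shows "complete_dfa S (cdfa S E L) \<and> dlang S (cdfa S E L) = L"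
proof
  have Esub: "E \<subseteq> lists S \<times> lists S" using eq by (simp add: equiv_def)
  have "\<forall>C\<in>lists S // E. \<forall>a\<in>S. dtrans (cdfa S E L) C a \<in> lists S // E"
  proof (intro ballI)
    fix C a assume C: "C \<in> lists S // E" and a: "a \<in> S"
    then obtain x where x: "C = E``{x}" "x \<in> lists S" by (meson quotientE)
    have "x \<in> C" using x equiv_class_self[OF eq] by simp
    hence "(SOME u. u \<in> C) \<in> C" by (rule someI)
    hence "(SOME u. u \<in> C) \<in> lists S" using x Esub by auto
    hence "(SOME u. u \<in> C) @ [a] \<in> lists S" using a by simp
    thus "dtrans (cdfa S E L) C a \<in> lists S // E" by (simp add: cdfa_def quotientI)
  qed
  moreover have "E``{[]} \<in> lists S // E" by (rule quotientI) simp
  moreover have "(\<lambda>u. E``{u}) ` L \<subseteq> lists S // E" using Ls by (auto intro: quotientI)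
  ultimately show "complete_dfa S (cdfa S E L)" using fin by (simp add: complete_dfa_def cdfa_def)
next
  show "dlang S (cdfa S E L) = L"
  proof (intro equalityI subsetI)
    fix w assume "w \<in> dlang S (cdfa S E L)"
    hence w: "w \<in> lists S" by (simp add: dlang_def)
    have "E``{w} \<in> (\<lambda>u. E``{u}) ` L"
      using \<open>w \<in> dlang S (cdfa S E L)\<close> cdfa_foldl[OF eq rc w, of L] by (simp add: dlang_def cdfa_def)
    then obtain u where u: "u \<in> L" "E``{w} = E``{u}" by auto
    hence "(w,u) \<in> E" using eq_equiv_class_iff[OF eq w] Ls by auto
    hence "(u,w) \<in> E" using eq by (metis equiv_def symE)
    thus "w \<in> L" using sat u by blast
  next
    fix w assume "w \<in> L"
    thus "w \<in> dlang S (cdfa S E L)" using cdfa_foldl[OF eq rc] Ls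
      by (auto simp: dlang_def cdfa_def)
  qed
qed

lemma quot_image: "lists S // E = (\<lambda>u. E``{u}) ` lists S"
  by (auto simp: quotient_def)

lemma card_lower:
  assumes D: "complete_dfa S D" and L: "dlang S D = L"
  shows "card (lists S // right_eq_lang S L) \<le> card (dstates D)"
proof -
  define f where "f w = foldl (dtrans D) (dinit D) w" for w
  define Q where "Q s = {x \<in> lists S. foldl (dtrans D) s x \<in> dfin D}" for s
  define \<phi> where "\<phi> s = {v \<in> lists S. left_quot v L = Q s}" for s
  have fin: "finite (dstates D)" using D by (simp add: complete_dfa_def)
  have fst: "foldl (dtrans D) s w \<in> dstates D" if "s \<in> dstates D" "w \<in> lists S" for s w
    using that(2,1) by (induction w arbitrary: s) (use D in \<open>auto simp: complete_dfa_def\<close>)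
  have lq: "left_quot u L = Q (f u)" if "u \<in> lists S" for u
    using that by (auto simp: left_quot_def Q_def f_def L[symmetric] dlang_def)
  have "lists S // right_eq_lang S L \<subseteq> \<phi> ` dstates D"
  proof
    fix C assume "C \<in> lists S // right_eq_lang S L"
    then obtain u where u: "u \<in> lists S" "C = right_eq_lang S L `` {u}" by (meson quotientE)
    hence "C = \<phi> (f u)" using lq by (auto simp: right_eq_lang_def \<phi>_def)
    moreover have "f u \<in> dstates D" using fst[OF _ u(1)] D by (simp add: f_def complete_dfa_def)
    ultimately show "C \<in> \<phi> ` dstates D" by blast
  qed
  hence "card (lists S // right_eq_lang S L) \<le> card (\<phi> ` dstates D)"
    using fin by (intro card_mono) auto
  also have "\<dots> \<le> card (dstates D)" using fin by (rule card_image_le)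
  finally show ?thesis .
qed

lemma relabel:
  assumes M: "complete_dfa S (M :: ('s,'a) dfa)"
  shows "\<exists>D' :: (nat,'a) dfa. complete_dfa S D' \<and> dlang S D' = dlang S M \<and> card (dstates D') = card (dstates M)"
proof -
  have fin: "finite (dstates M)" using M by (simp add: complete_dfa_def)
  obtain h :: "'s \<Rightarrow> nat" where h: "inj_on h (dstates M)"
    using finite_imp_inj_to_nat_seg[OF fin] by blast
  define g where "g = inv_into (dstates M) h"
  define D' where "D' = \<lparr> dstates = h ` dstates M, dinit = h (dinit M),
      dtrans = (\<lambda>n a. h (dtrans M (g n) a)), dfin = h ` dfin M \<rparr>"
  have gh: "g (h s) = s" if "s \<in> dstates M" for s using h that by (simp add: g_def)
  have fst: "foldl (dtrans M) s w \<in> dstates M" if "s \<in> dstates M" "w \<in> lists S" for s w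
    using that(2,1) by (induction w arbitrary: s) (use M in \<open>auto simp: complete_dfa_def\<close>)
  have ff: "foldl (dtrans D') (h s) w = h (foldl (dtrans M) s w)" if "s \<in> dstates M" "w \<in> lists S" for s w
    using that(2,1)
  proof (induction w arbitrary: s)
    case Nil then show ?case by simp
  next
    case (Cons a w)
    have "dtrans M s a \<in> dstates M" using Cons M by (simp add: complete_dfa_def)
    then show ?case using Cons by (simp add: D'_def gh)
  qed
  have "complete_dfa S D'"
    using M gh by (auto simp: complete_dfa_def D'_def)
  moreover have "dlang S D' = dlang S M"
  proof -
    have "h x \<in> h ` dfin M \<longleftrightarrow> x \<in> dfin M" if "x \<in> dstates M" for x
      using that h M by (auto simp: complete_dfa_def inj_on_def)
    moreover have "dinit M \<in> dstates M" using M by (simp add: complete_dfa_def)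
    ultimately have "w \<in> lists S \<Longrightarrow> foldl (dtrans D') (dinit D') w \<in> dfin D' \<longleftrightarrow> foldl (dtrans M) (dinit M) w \<in> dfin M" for w
      using ff[of "dinit M" w] fst[of "dinit M" w] by (simp add: D'_def)
    thus ?thesis unfolding dlang_def by blast
  qed
  moreover have "card (dstates D') = card (dstates M)"
    using h by (simp add: D'_def card_image)
  ultimately show ?thesis by blast
qed



lemma rev_lists: "rev w \<in> lists A \<longleftrightarrow> w \<in> lists A"
  by (simp add: in_lists_conv_set)

lemma W_init_q: "u \<in> W N (init N) {q} \<longleftrightarrow> q \<in> post N u (init N)"
  by (simp add: post_def)

lemma P_cl_iff:
  assumes "T \<subseteq> lists S"
  shows "P_cl (right_eq_lang S L) T = T \<longleftrightarrow> (\<forall>u v. (u,v) \<in> right_eq_lang S L \<longrightarrow> u \<in> T \<longrightarrow> v \<in> T)"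
proof -
  have "T \<subseteq> P_cl (right_eq_lang S L) T" using assms by (auto simp: P_cl_def right_eq_lang_def)
  thus ?thesis by (auto simp: P_cl_def)
qed

lemma closed_iff:
  assumes wf: "wf_nfa N"
  shows "(\<forall>q\<in>states N. \<forall>u v. (u,v) \<in> right_eq_lang (alpha N) (nlang N) \<longrightarrow>
             u \<in> W N (init N) {q} \<longrightarrow> v \<in> W N (init N) {q})
       \<longleftrightarrow> right_eq_nfa N = right_eq_lang (alpha N) (nlang N)"
proof
  assume H: "\<forall>q\<in>states N. \<forall>u v. (u,v) \<in> right_eq_lang (alpha N) (nlang N) \<longrightarrow>
             u \<in> W N (init N) {q} \<longrightarrow> v \<in> W N (init N) {q}"
  have sub: "post N u (init N) \<subseteq> post N v (init N)"
    if "(u,v) \<in> right_eq_lang (alpha N) (nlang N)" for u v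
    using H that post_sub[OF wf, of u] unfolding W_init_q by blast
  show "right_eq_nfa N = right_eq_lang (alpha N) (nlang N)"
    unfolding R_eq_iff
  proof (intro ballI impI)
    fix u v assume "u \<in> lists (alpha N)" "v \<in> lists (alpha N)" "left_quot u (nlang N) = left_quot v (nlang N)"
    hence "(u,v) \<in> right_eq_lang (alpha N) (nlang N)" "(v,u) \<in> right_eq_lang (alpha N) (nlang N)"
      by (auto simp: right_eq_lang_def)
    thus "post N u (init N) = post N v (init N)" using sub by blast
  qed
next
  assume "right_eq_nfa N = right_eq_lang (alpha N) (nlang N)"
  thus "\<forall>q\<in>states N. \<forall>u v. (u,v) \<in> right_eq_lang (alpha N) (nlang N) \<longrightarrow>
             u \<in> W N (init N) {q} \<longrightarrow> v \<in> W N (init N) {q}"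
  proof (intro ballI allI impI)
    fix q u v assume "(u,v) \<in> right_eq_lang (alpha N) (nlang N)" "u \<in> W N (init N) {q}"
    hence "(u,v) \<in> right_eq_nfa N" "u \<in> W N (init N) {q}" using \<open>right_eq_nfa N = _\<close> by simp_all
    hence "post N u (init N) = post N v (init N)" "q \<in> post N u (init N)"
      by (simp_all add: right_eq_nfa_def W_init_q)
    thus "v \<in> W N (init N) {q}" by (simp add: W_init_q)
  qed
qed

lemma rev_delta:
  assumes wf: "wf_nfa N"
  shows "p \<in> states N \<Longrightarrow> w \<in> lists (alpha N) \<Longrightarrow>
    q \<in> delta_hat (reverse_nfa N) p w \<longleftrightarrow> q \<in> states N \<and> p \<in> delta_hat N q (rev w)"
proof (induction w arbitrary: p)
  case Nil then show ?case by auto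
next
  case (Cons a w)
  have "q \<in> delta_hat (reverse_nfa N) p (a # w) \<longleftrightarrow>
        (\<exists>p'. p' \<in> states N \<and> p \<in> trans N p' a \<and> q \<in> delta_hat (reverse_nfa N) p' w)"
    by (auto simp: reverse_nfa_def)
  also have "\<dots> \<longleftrightarrow> (\<exists>p'. p' \<in> states N \<and> p \<in> trans N p' a \<and> q \<in> states N \<and> p' \<in> delta_hat N q (rev w))"
    using Cons by auto
  also have "\<dots> \<longleftrightarrow> q \<in> states N \<and> p \<in> delta_hat N q (rev (a # w))"
  proof (cases "q \<in> states N")
    case True
    have "rev w \<in> lists (alpha N)" using Cons.prems by (simp add: rev_lists)
    hence "delta_hat N q (rev w) \<subseteq> states N" using delta_hat_states[OF wf True] by blast
    then show ?thesis using True by (auto simp: delta_hat_append)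
  qed simp
  finally show ?case .
qed

lemma rev_W:
  assumes wf: "wf_nfa N" and q: "q \<in> states N"
  shows "W (reverse_nfa N) {q} (init N) = {w. rev w \<in> W N (init N) {q}}"
proof -
  have "init N \<subseteq> states N" using wf by (simp add: wf_nfa_def)
  thus ?thesis using rev_delta[OF wf q]
    by (auto simp: W_def) (auto simp: reverse_nfa_def)
qed

lemma rev_sel[simp]: "alpha (reverse_nfa N) = alpha N" "states (reverse_nfa N) = states N"
  "init (reverse_nfa N) = fin N" "fin (reverse_nfa N) = init N"
  by (simp_all add: reverse_nfa_def)

lemma rev_lang:
  assumes wf: "wf_nfa N"
  shows "w \<in> nlang (reverse_nfa N) \<longleftrightarrow> w \<in> lists (alpha N) \<and> rev w \<in> nlang N"
proof (cases "w \<in> lists (alpha N)")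
  case True
  have I: "init N \<subseteq> states N" and F: "fin N \<subseteq> states N" using wf by (auto simp: wf_nfa_def)
  have "w \<in> nlang (reverse_nfa N) \<longleftrightarrow> (\<exists>f\<in>fin N. \<exists>i\<in>init N. i \<in> delta_hat (reverse_nfa N) f w)"
    using True unfolding nlang_def W_def rev_sel by blast
  also have "\<dots> \<longleftrightarrow> (\<exists>f\<in>fin N. \<exists>i\<in>init N. f \<in> delta_hat N i (rev w))"
    using rev_delta[OF wf _ True] I F by blast
  also have "\<dots> \<longleftrightarrow> rev w \<in> nlang N"
    using True rev_lists[of w "alpha N"] unfolding nlang_def W_def by blast
  finally show ?thesis using True by blast
next
  case False
  thus ?thesis by (simp add: nlang_def W_def)
qed

definition aeq :: "'a set \<Rightarrow> 'a list set \<Rightarrow> 'a list \<Rightarrow> 'a list \<Rightarrow> bool" where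
  "aeq S K x y \<longleftrightarrow> x \<in> lists S \<and> y \<in> lists S \<and> (\<forall>Y\<in>quotients S K. x \<in> Y \<longleftrightarrow> y \<in> Y)"

lemma union_atoms_iff:
  assumes T: "T \<subseteq> lists S"
  shows "(\<exists>A \<subseteq> atoms S K. T = \<Union>A) \<longleftrightarrow> (\<forall>x\<in>T. \<forall>y. aeq S K x y \<longrightarrow> y \<in> T)"
proof
  assume "\<exists>A \<subseteq> atoms S K. T = \<Union>A"
  then obtain A where A: "A \<subseteq> atoms S K" "T = \<Union>A" by blast
  show "\<forall>x\<in>T. \<forall>y. aeq S K x y \<longrightarrow> y \<in> T"
  proof (intro ballI allI impI)
    fix x y assume "x \<in> T" "aeq S K x y"
    then obtain B where B: "B \<in> A" "x \<in> B" using A by blast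
    have "B \<in> atoms S K" using A B by blast
    hence "\<exists>X. X \<subseteq> quotients S K \<and> B = lists S \<inter> \<Inter> X \<inter> (\<Inter>Y\<in>quotients S K - X. lists S - Y)"
      unfolding atoms_def mem_Collect_eq by (elim conjE)
    then obtain X where X: "X \<subseteq> quotients S K"
      "B = lists S \<inter> \<Inter> X \<inter> (\<Inter>Y\<in>quotients S K - X. lists S - Y)"
      by (elim exE conjE)
    have xB: "x \<in> lists S" "\<And>Y. Y \<in> X \<Longrightarrow> x \<in> Y" "\<And>Y. Y \<in> quotients S K - X \<Longrightarrow> x \<notin> Y"
      using B(2) unfolding X(2) by blast+
    have ae: "y \<in> lists S" "\<And>Y. Y \<in> quotients S K \<Longrightarrow> x \<in> Y \<longleftrightarrow> y \<in> Y"
      using \<open>aeq S K x y\<close> unfolding aeq_def by auto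
    have "y \<in> lists S \<inter> \<Inter> X \<inter> (\<Inter>Y\<in>quotients S K - X. lists S - Y)"
      using ae xB X(1) by (intro IntI InterI INT_I DiffI) blast+
    hence "y \<in> B" unfolding X(2) .
    thus "y \<in> T" using A B by blast
  qed
next
  assume H: "\<forall>x\<in>T. \<forall>y. aeq S K x y \<longrightarrow> y \<in> T"
  define cl where "cl x = {y. aeq S K x y}" for x
  have "cl x \<in> atoms S K" if "x \<in> T" for x
  proof -
    let ?X = "{Y \<in> quotients S K. x \<in> Y}"
    have xl: "x \<in> lists S" using that T by blast
    have xcl: "x \<in> cl x" using xl by (simp add: cl_def aeq_def)
    have eq: "cl x = lists S \<inter> \<Inter> ?X \<inter> (\<Inter>Y\<in>quotients S K - ?X. lists S - Y)"
    proof (intro equalityI subsetI)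
      fix y assume "y \<in> cl x"
      hence ae: "y \<in> lists S" "\<And>Y. Y \<in> quotients S K \<Longrightarrow> x \<in> Y \<longleftrightarrow> y \<in> Y"
        by (auto simp: cl_def aeq_def)
      show "y \<in> lists S \<inter> \<Inter> ?X \<inter> (\<Inter>Y\<in>quotients S K - ?X. lists S - Y)"
        using ae by (intro IntI InterI INT_I DiffI) blast+
    next
      fix y assume y: "y \<in> lists S \<inter> \<Inter> ?X \<inter> (\<Inter>Y\<in>quotients S K - ?X. lists S - Y)"
      have yl: "y \<in> lists S" using y by blast
      have "x \<in> Y \<longleftrightarrow> y \<in> Y" if Y: "Y \<in> quotients S K" for Y
      proof (cases "x \<in> Y")
        case True
        hence "Y \<in> ?X" using Y by blast
        hence "y \<in> Y" using y by blast
        thus ?thesis using True by blast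
      next
        case False
        hence "Y \<in> quotients S K - ?X" using Y by blast
        hence "y \<notin> Y" using y by blast
        thus ?thesis using False by blast
      qed
      thus "y \<in> cl x" using xl yl by (simp add: cl_def aeq_def)
    qed
    show ?thesis unfolding atoms_def mem_Collect_eq
      apply (rule conjI)
      using xcl apply blast
      apply (rule exI[of _ ?X])
      apply (rule conjI)
       apply blast
      by (rule eq)
  qed
  moreover have "T = \<Union>(cl ` T)"
  proof
    show "T \<subseteq> \<Union>(cl ` T)"
    proof
      fix x assume "x \<in> T"
      moreover hence "x \<in> cl x" using T by (auto simp: cl_def aeq_def)
      ultimately show "x \<in> \<Union>(cl ` T)" by blast
    qed
    show "\<Union>(cl ` T) \<subseteq> T" using H by (auto simp: cl_def)
  qed
  ultimately show "\<exists>A \<subseteq> atoms S K. T = \<Union>A" by blast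
qed

lemma aeq_rev:
  assumes wf: "wf_nfa N"
  shows "aeq (alpha N) (nlang (reverse_nfa N)) x y \<longleftrightarrow>
     x \<in> lists (alpha N) \<and> y \<in> lists (alpha N) \<and>
     left_quot (rev x) (nlang N) = left_quot (rev y) (nlang N)"
proof -
  let ?S = "alpha N" and ?K = "nlang (reverse_nfa N)" and ?L = "nlang N"
  have mem: "x \<in> left_quot u ?K \<longleftrightarrow> rev u \<in> left_quot (rev x) ?L"
    if "x \<in> lists ?S" "u \<in> lists ?S" for x u
    using that nlang_lists[of N] by (auto simp: left_quot_def rev_lang[OF wf])
  have Lq: "left_quot z ?L \<subseteq> lists ?S" for z using nlang_lists[of N] by (auto simp: left_quot_def)
  show ?thesis
  proof (cases "x \<in> lists ?S \<and> y \<in> lists ?S")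
    case False then show ?thesis by (auto simp: aeq_def)
  next
    case True
    have "(\<forall>Y\<in>quotients ?S ?K. x \<in> Y \<longleftrightarrow> y \<in> Y) \<longleftrightarrow> left_quot (rev x) ?L = left_quot (rev y) ?L"
    proof
      assume H: "\<forall>Y\<in>quotients ?S ?K. x \<in> Y \<longleftrightarrow> y \<in> Y"
      have "z \<in> left_quot (rev x) ?L \<longleftrightarrow> z \<in> left_quot (rev y) ?L" if z: "z \<in> lists ?S" for z
      proof -
        have "left_quot (rev z) ?K \<in> quotients ?S ?K" using z by (auto simp: quotients_def)
        hence "x \<in> left_quot (rev z) ?K \<longleftrightarrow> y \<in> left_quot (rev z) ?K" using H by blast
        moreover have "rev z \<in> lists ?S" using z by (simp add: rev_lists)
        ultimately show ?thesis using mem[of x "rev z"] mem[of y "rev z"] True z by simp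
      qed
      thus "left_quot (rev x) ?L = left_quot (rev y) ?L" using Lq by blast
    next
      assume E: "left_quot (rev x) ?L = left_quot (rev y) ?L"
      show "\<forall>Y\<in>quotients ?S ?K. x \<in> Y \<longleftrightarrow> y \<in> Y"
      proof
        fix Y assume "Y \<in> quotients ?S ?K"
        then obtain u where "u \<in> lists ?S" "Y = left_quot u ?K" by (auto simp: quotients_def)
        thus "x \<in> Y \<longleftrightarrow> y \<in> Y" using mem[of x u] mem[of y u] True E by simp
      qed
    qed
    thus ?thesis using True by (simp add: aeq_def)
  qed
qed



lemma atomic_iff:
  assumes wf: "wf_nfa N"
  shows "atomic (reverse_nfa N) \<longleftrightarrow>
    (\<forall>q\<in>states N. \<forall>u v. (u,v) \<in> right_eq_lang (alpha N) (nlang N) \<longrightarrow>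
             u \<in> W N (init N) {q} \<longrightarrow> v \<in> W N (init N) {q})"
proof -
  let ?S = "alpha N" and ?K = "nlang (reverse_nfa N)"
  have Wl: "W (reverse_nfa N) {q} (init N) \<subseteq> lists ?S" for q by (auto simp: W_def reverse_nfa_def)
  have "atomic (reverse_nfa N) \<longleftrightarrow> (\<forall>q\<in>states N.
      \<forall>x\<in>W (reverse_nfa N) {q} (init N). \<forall>y. aeq ?S ?K x y \<longrightarrow> y \<in> W (reverse_nfa N) {q} (init N))"
    using union_atoms_iff[OF Wl] by (simp add: atomic_def reverse_nfa_def)
  also have "\<dots> \<longleftrightarrow> (\<forall>q\<in>states N. \<forall>u v. (u,v) \<in> right_eq_lang (alpha N) (nlang N) \<longrightarrow>
             u \<in> W N (init N) {q} \<longrightarrow> v \<in> W N (init N) {q})"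
  proof (intro ball_cong refl)
    fix q assume q: "q \<in> states N"
    have WN: "W N (init N) {q} \<subseteq> lists ?S" by (auto simp: W_def)
    show "(\<forall>x\<in>W (reverse_nfa N) {q} (init N). \<forall>y. aeq ?S ?K x y \<longrightarrow> y \<in> W (reverse_nfa N) {q} (init N))
      \<longleftrightarrow> (\<forall>u v. (u,v) \<in> right_eq_lang (alpha N) (nlang N) \<longrightarrow>
             u \<in> W N (init N) {q} \<longrightarrow> v \<in> W N (init N) {q})"
      unfolding rev_W[OF wf q] aeq_rev[OF wf]
    proof
      assume H: "\<forall>x\<in>{w. rev w \<in> W N (init N) {q}}. \<forall>y. x \<in> lists ?S \<and> y \<in> lists ?S \<and>
             left_quot (rev x) (nlang N) = left_quot (rev y) (nlang N) \<longrightarrow> y \<in> {w. rev w \<in> W N (init N) {q}}"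
      show "\<forall>u v. (u,v) \<in> right_eq_lang (alpha N) (nlang N) \<longrightarrow>
             u \<in> W N (init N) {q} \<longrightarrow> v \<in> W N (init N) {q}"
      proof (intro allI impI)
        fix u v assume uv: "(u,v) \<in> right_eq_lang (alpha N) (nlang N)" and u: "u \<in> W N (init N) {q}"
        have uvl: "rev u \<in> lists ?S" "rev v \<in> lists ?S" "left_quot u (nlang N) = left_quot v (nlang N)"
          using uv by (auto simp: right_eq_lang_def rev_lists)
        have a1: "rev u \<in> {w. rev w \<in> W N (init N) {q}}" using u by (simp only: mem_Collect_eq rev_rev_ident)
        have a2: "rev u \<in> lists ?S \<and> rev v \<in> lists ?S \<and>
             left_quot (rev (rev u)) (nlang N) = left_quot (rev (rev v)) (nlang N)" using uvl by (simp only: rev_rev_ident)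
        have "rev v \<in> {w. rev w \<in> W N (init N) {q}}"
          by (rule H[rule_format, OF a1 a2])
        thus "v \<in> W N (init N) {q}" by (simp only: mem_Collect_eq rev_rev_ident)
      qed
    next
      assume H: "\<forall>u v. (u,v) \<in> right_eq_lang (alpha N) (nlang N) \<longrightarrow>
             u \<in> W N (init N) {q} \<longrightarrow> v \<in> W N (init N) {q}"
      show "\<forall>x\<in>{w. rev w \<in> W N (init N) {q}}. \<forall>y. x \<in> lists ?S \<and> y \<in> lists ?S \<and>
             left_quot (rev x) (nlang N) = left_quot (rev y) (nlang N) \<longrightarrow> y \<in> {w. rev w \<in> W N (init N) {q}}"
      proof (intro ballI allI impI)
        fix x y assume x: "x \<in> {w. rev w \<in> W N (init N) {q}}"
          and xy: "x \<in> lists ?S \<and> y \<in> lists ?S \<and> left_quot (rev x) (nlang N) = left_quot (rev y) (nlang N)"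
        hence "(rev x, rev y) \<in> right_eq_lang (alpha N) (nlang N)" by (simp add: right_eq_lang_def rev_lists)
        moreover have "rev x \<in> W N (init N) {q}" using x by simp
        ultimately have "rev y \<in> W N (init N) {q}" by (rule H[rule_format])
        thus "y \<in> {w. rev w \<in> W N (init N) {q}}" by simp
      qed
    qed
  qed
  finally show ?thesis .
qed



lemma left_quot_append: "left_quot (u @ v) L = left_quot v (left_quot u L)"
  by (simp add: left_quot_def)

lemma finite_quot_R:
  assumes wf: "wf_nfa N"
  shows "finite (lists (alpha N) // right_eq_nfa N)"
proof -
  have "lists (alpha N) // right_eq_nfa N \<subseteq> (\<lambda>P. {v \<in> lists (alpha N). P = post N v (init N)}) ` Pow (states N)"
  proof
    fix C assume "C \<in> lists (alpha N) // right_eq_nfa N"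
    then obtain u where u: "u \<in> lists (alpha N)" "C = right_eq_nfa N `` {u}" by (meson quotientE)
    hence "C = (\<lambda>P. {v \<in> lists (alpha N). P = post N v (init N)}) (post N u (init N))"
      by (auto simp: right_eq_nfa_def)
    moreover have "post N u (init N) \<in> Pow (states N)" using post_sub[OF wf] by blast
    ultimately show "C \<in> (\<lambda>P. {v \<in> lists (alpha N). P = post N v (init N)}) ` Pow (states N)" by blast
  qed
  moreover have "finite (states N)" using wf by (simp add: wf_nfa_def)
  ultimately show ?thesis by (meson finite_Pow_iff finite_imageI finite_subset)
qed

lemma finite_quot_NL:
  assumes wf: "wf_nfa N"
  shows "finite (lists (alpha N) // right_eq_lang (alpha N) (nlang N))"
proof -
  let ?f = "\<lambda>P. {v \<in> lists (alpha N). left_quot v (nlang N) = W N P (fin N)}"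
  have "lists (alpha N) // right_eq_lang (alpha N) (nlang N) \<subseteq> ?f ` Pow (states N)"
  proof
    fix C assume "C \<in> lists (alpha N) // right_eq_lang (alpha N) (nlang N)"
    then obtain u where u: "u \<in> lists (alpha N)" "C = right_eq_lang (alpha N) (nlang N) `` {u}" by (meson quotientE)
    hence "C = ?f (post N u (init N))"
      using W_post[OF u(1)] by (auto simp: right_eq_lang_def)
    moreover have "post N u (init N) \<in> Pow (states N)" using post_sub[OF wf] by blast
    ultimately show "C \<in> ?f ` Pow (states N)" by blast
  qed
  moreover have "finite (states N)" using wf by (simp add: wf_nfa_def)
  ultimately show ?thesis by (meson finite_Pow_iff finite_imageI finite_subset)
qed

lemma Gr_ok:
  assumes wf: "wf_nfa N"
  shows "complete_dfa (alpha N) (Gr N) \<and> dlang (alpha N) (Gr N) = nlang N"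
  unfolding Gr_cdfa
proof (rule cdfa_props[OF equiv_R])
  show "(u @ [a], v @ [a]) \<in> right_eq_nfa N" if "(u, v) \<in> right_eq_nfa N" "a \<in> alpha N" for u v a
    using that by (auto simp: right_eq_nfa_def post_append)
  show "v \<in> nlang N" if "(u, v) \<in> right_eq_nfa N" "u \<in> nlang N" for u v
    using that lang_post[of u N] lang_post[of v N] by (auto simp: right_eq_nfa_def)
  show "nlang N \<subseteq> lists (alpha N)" by (rule nlang_lists)
  show "finite (lists (alpha N) // right_eq_nfa N)" by (rule finite_quot_R[OF wf])
qed

lemma NL_ok:
  assumes wf: "wf_nfa N"
  shows "complete_dfa (alpha N) (cdfa (alpha N) (right_eq_lang (alpha N) (nlang N)) (nlang N)) \<and>
         dlang (alpha N) (cdfa (alpha N) (right_eq_lang (alpha N) (nlang N)) (nlang N)) = nlang N"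
proof (rule cdfa_props[OF equiv_NL])
  show "(u @ [a], v @ [a]) \<in> right_eq_lang (alpha N) (nlang N)"
    if "(u, v) \<in> right_eq_lang (alpha N) (nlang N)" "a \<in> alpha N" for u v a
    using that by (auto simp: right_eq_lang_def left_quot_append)
  show "v \<in> nlang N" if "(u, v) \<in> right_eq_lang (alpha N) (nlang N)" "u \<in> nlang N" for u v
  proof -
    have "[] \<in> left_quot u (nlang N)" using that(2) by (simp add: left_quot_def)
    hence "[] \<in> left_quot v (nlang N)" using that(1) by (simp add: right_eq_lang_def)
    thus ?thesis by (simp add: left_quot_def)
  qed
  show "nlang N \<subseteq> lists (alpha N)" by (rule nlang_lists)
  show "finite (lists (alpha N) // right_eq_lang (alpha N) (nlang N))" by (rule finite_quot_NL[OF wf])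
qed

lemma minimal_iff:
  assumes wf: "wf_nfa N"
  shows "is_minimal_dfa (alpha N) (nlang N) (Gr N) \<longleftrightarrow> right_eq_nfa N = right_eq_lang (alpha N) (nlang N)"
proof -
  let ?S = "alpha N" and ?L = "nlang N"
  let ?R = "right_eq_nfa N" and ?E = "right_eq_lang ?S ?L"
  have cardGr: "card (dstates (Gr N)) = card (lists ?S // ?R)" by (simp add: Gr_cdfa cdfa_def)
  have im1: "?E `` (?R `` {u}) = ?E `` {u}" if u: "u \<in> lists ?S" for u
  proof
    show "?E `` (?R `` {u}) \<subseteq> ?E `` {u}"
    proof
      fix w assume "w \<in> ?E `` (?R `` {u})"
      then obtain u' where "(u,u') \<in> ?R" "(u',w) \<in> ?E" by blast
      hence "(u,u') \<in> ?E" "(u',w) \<in> ?E" using R_sub_NL[of N] by blast+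
      hence "(u,w) \<in> ?E" by (auto simp: right_eq_lang_def)
      thus "w \<in> ?E `` {u}" by blast
    qed
    have "(u,u) \<in> ?R" using u by (simp add: right_eq_nfa_def)
    thus "?E `` {u} \<subseteq> ?E `` (?R `` {u})" by blast
  qed
  have img: "(\<lambda>C. ?E `` C) ` (lists ?S // ?R) = lists ?S // ?E"
    unfolding quot_image image_image using im1 by (intro image_cong refl) simp
  show ?thesis
  proof
    assume M: "is_minimal_dfa ?S ?L (Gr N)"
    obtain D' :: "(nat, 'b) dfa" where D': "complete_dfa ?S D'" "dlang ?S D' = ?L"
      "card (dstates D') = card (lists ?S // ?E)"
      using relabel[of ?S "cdfa ?S ?E ?L"] NL_ok[OF wf] by (auto simp: cdfa_def)
    have le1: "card (lists ?S // ?R) \<le> card (lists ?S // ?E)"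
      using M D' cardGr unfolding is_minimal_dfa_def by metis
    have finR: "finite (lists ?S // ?R)" by (rule finite_quot_R[OF wf])
    have "card (lists ?S // ?E) \<le> card (lists ?S // ?R)"
      unfolding img[symmetric] using finR by (rule card_image_le)
    hence "card ((\<lambda>C. ?E `` C) ` (lists ?S // ?R)) = card (lists ?S // ?R)" using le1 img by simp
    hence inj: "inj_on (\<lambda>C. ?E `` C) (lists ?S // ?R)" using finR eq_card_imp_inj_on by blast
    show "?R = ?E" unfolding R_eq_iff
    proof (intro ballI impI)
      fix u v assume u: "u \<in> lists ?S" and v: "v \<in> lists ?S" and q: "left_quot u ?L = left_quot v ?L"
      have "(u,v) \<in> ?E" using u v q by (simp add: right_eq_lang_def)
      hence "?E `` {u} = ?E `` {v}" using eq_equiv_class_iff[OF equiv_NL u v] by simp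
      hence "?E `` (?R `` {u}) = ?E `` (?R `` {v})" using im1 u v by simp
      hence "?R `` {u} = ?R `` {v}"
        using inj quotientI[OF u, of ?R] quotientI[OF v, of ?R] unfolding inj_on_def by blast
      hence "(u,v) \<in> ?R" using eq_equiv_class_iff[OF equiv_R u v] by simp
      thus "post N u (init N) = post N v (init N)" by (simp add: right_eq_nfa_def)
    qed
  next
    assume B: "?R = ?E"
    show "is_minimal_dfa ?S ?L (Gr N)"
      unfolding is_minimal_dfa_def
    proof (intro conjI allI impI)
      show "complete_dfa ?S (Gr N)" "dlang ?S (Gr N) = ?L" using Gr_ok[OF wf] by auto
      fix D' :: "(nat, 'b) dfa" assume "complete_dfa ?S D' \<and> dlang ?S D' = ?L"
      thus "card (dstates (Gr N)) \<le> card (dstates D')"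
        using card_lower[of ?S D' ?L] cardGr B by simp
    qed
  qed
qed

theorem corollary1:
  fixes N :: "('q, 'a) nfa"
  assumes "wf_nfa N"
  defines "L \<equiv> nlang N"
  shows "(is_minimal_dfa (alpha N) L (Gr N) \<longleftrightarrow> right_eq_nfa N = right_eq_lang (alpha N) L)
       \<and> (is_minimal_dfa (alpha N) L (Gr N) \<longleftrightarrow>
            (\<forall>u\<in>lists (alpha N). \<forall>v\<in>lists (alpha N).
               W N (post N u (init N)) (fin N) = W N (post N v (init N)) (fin N)
               \<longleftrightarrow> post N u (init N) = post N v (init N)))
       \<and> (is_minimal_dfa (alpha N) L (Gr N) \<longleftrightarrow>
            (\<forall>q\<in>states N. P_cl (right_eq_lang (alpha N) L) (W N (init N) {q}) = W N (init N) {q}))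
       \<and> (is_minimal_dfa (alpha N) L (Gr N) \<longleftrightarrow> atomic (reverse_nfa N))"
proof -
  note wf = assms(1)
  have a: "is_minimal_dfa (alpha N) L (Gr N) \<longleftrightarrow> right_eq_nfa N = right_eq_lang (alpha N) L"
    unfolding L_def by (rule minimal_iff[OF wf])
  have c: "(\<forall>u\<in>lists (alpha N). \<forall>v\<in>lists (alpha N).
               W N (post N u (init N)) (fin N) = W N (post N v (init N)) (fin N)
               \<longleftrightarrow> post N u (init N) = post N v (init N))
        \<longleftrightarrow> right_eq_nfa N = right_eq_lang (alpha N) L"
    unfolding L_def R_eq_iff
  proof (rule iffI; intro ballI impI)
    fix u v assume H: "\<forall>u\<in>lists (alpha N). \<forall>v\<in>lists (alpha N).
               W N (post N u (init N)) (fin N) = W N (post N v (init N)) (fin N)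
               \<longleftrightarrow> post N u (init N) = post N v (init N)"
      and u: "u \<in> lists (alpha N)" and v: "v \<in> lists (alpha N)"
      and q: "left_quot u (nlang N) = left_quot v (nlang N)"
    have "W N (post N u (init N)) (fin N) = W N (post N v (init N)) (fin N)"
      using q W_post[OF u] W_post[OF v] by simp
    thus "post N u (init N) = post N v (init N)" using H u v by blast
  next
    fix u v assume H: "\<forall>u\<in>lists (alpha N). \<forall>v\<in>lists (alpha N).
      left_quot u (nlang N) = left_quot v (nlang N) \<longrightarrow> post N u (init N) = post N v (init N)"
      and u: "u \<in> lists (alpha N)" and v: "v \<in> lists (alpha N)"
    show "W N (post N u (init N)) (fin N) = W N (post N v (init N)) (fin N)
               \<longleftrightarrow> post N u (init N) = post N v (init N)"
    proof
      assume "W N (post N u (init N)) (fin N) = W N (post N v (init N)) (fin N)"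
      hence "left_quot u (nlang N) = left_quot v (nlang N)" using W_post[OF u] W_post[OF v] by simp
      thus "post N u (init N) = post N v (init N)" using H u v by blast
    next
      assume pe: "post N u (init N) = post N v (init N)"
      show "W N (post N u (init N)) (fin N) = W N (post N v (init N)) (fin N)" by (simp only: pe)
    qed
  qed
  have d: "(\<forall>q\<in>states N. P_cl (right_eq_lang (alpha N) L) (W N (init N) {q}) = W N (init N) {q})
       \<longleftrightarrow> right_eq_nfa N = right_eq_lang (alpha N) L"
  proof -
    have Wsub: "W N (init N) {q} \<subseteq> lists (alpha N)" for q by (auto simp: W_def)
    hence "(\<forall>q\<in>states N. P_cl (right_eq_lang (alpha N) L) (W N (init N) {q}) = W N (init N) {q})
       \<longleftrightarrow> (\<forall>q\<in>states N. \<forall>u v. (u,v) \<in> right_eq_lang (alpha N) (nlang N) \<longrightarrow>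
             u \<in> W N (init N) {q} \<longrightarrow> v \<in> W N (init N) {q})"
      unfolding L_def by (simp only: P_cl_iff[OF Wsub])
    thus ?thesis unfolding L_def closed_iff[OF wf] .
  qed
  have e: "atomic (reverse_nfa N) \<longleftrightarrow> right_eq_nfa N = right_eq_lang (alpha N) L"
    unfolding L_def atomic_iff[OF wf] closed_iff[OF wf] ..
  show ?thesis using a c d e by blast
qed

end
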